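(* For $\lambda,\mu,\nu\in k$ let $$\mathscr{E}_{\lambda,\mu,\nu}=\left\{\begin{pmatrix}a&0&0&0\\ b&a&0&0\\ c&0&a&0\\ d&\lambda b+\nu c&\nu b+\mu c&a\end{pmatrix}\;\middle|\;a,b,c,d\in k\right\},$$ a commutative $k$-algebra under the usual matrix multiplication. Then $\mathscr{E}_{\lambda,\mu,\nu}$ is a symmetric Frobenius $k$-algebra if and only if $\lambda\mu-\nu^2\neq0$.
   Context: $k$ is an algebraically closed field of characteristic zero. A finite-dimensional $k$-algebra $E$ (concentrated in degree $0$) is Frobenius if $E\cong E^*=\mathrm{Hom}_k(E,k)$ as left $E$-modules, and symmetric Frobenius if $E\cong E^*$ as $E$-bimodules. *)

theory Defs
  imports "Jordan_Normal_Form.Matrix" "HOL-Computational_Algebra.Polynomial"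
begin

definition alg_closed :: "'a::field itself \<Rightarrow> bool" where
  "alg_closed _ \<longleftrightarrow> (\<forall>p :: 'a poly. degree p > 0 \<longrightarrow> (\<exists>x. poly p x = 0))"

definition E_mat :: "'a::field \<Rightarrow> 'a \<Rightarrow> 'a \<Rightarrow> 'a \<Rightarrow> 'a \<Rightarrow> 'a \<Rightarrow> 'a \<Rightarrow> 'a mat" where
  "E_mat lam mu nu a b c d = mat_of_rows_list 4
     [[a, 0, 0, 0],
      [b, a, 0, 0],
      [c, 0, a, 0],
      [d, lam * b + nu * c, nu * b + mu * c, a]]"

definition E_alg :: "'a::field \<Rightarrow> 'a \<Rightarrow> 'a \<Rightarrow> 'a mat set" where
  "E_alg lam mu nu = {E_mat lam mu nu a b c d | a b c d. True}"

definition lin_dual :: "'a::field mat set \<Rightarrow> ('a mat \<Rightarrow> 'a) set" where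
  "lin_dual A = {f. (\<forall>x\<in>A. \<forall>y\<in>A. f (x + y) = f x + f y)
                  \<and> (\<forall>c. \<forall>x\<in>A. f (c \<cdot>\<^sub>m x) = c * f x)
                  \<and> (\<forall>x. x \<notin> A \<longrightarrow> f x = 0)}"

definition dual_act :: "'a::field mat set \<Rightarrow> 'a mat \<Rightarrow> ('a mat \<Rightarrow> 'a) \<Rightarrow> 'a mat \<Rightarrow> ('a mat \<Rightarrow> 'a)" where
  "dual_act A x f y = (\<lambda>e. if e \<in> A then f (y * e * x) else 0)"

definition symmetric_frobenius :: "'a::field mat set \<Rightarrow> bool" where
  "symmetric_frobenius A \<longleftrightarrow> (\<exists>\<phi> :: 'a mat \<Rightarrow> ('a mat \<Rightarrow> 'a).
      bij_betw \<phi> A (lin_dual A)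
    \<and> (\<forall>x\<in>A. \<forall>y\<in>A. \<phi> (x + y) = (\<lambda>e. \<phi> x e + \<phi> y e))
    \<and> (\<forall>c. \<forall>x\<in>A. \<phi> (c \<cdot>\<^sub>m x) = (\<lambda>e. c * \<phi> x e))
    \<and> (\<forall>x\<in>A. \<forall>a\<in>A. \<forall>y\<in>A. \<phi> (x * a * y) = dual_act A x (\<phi> a) y))"

end

theory Submission
  imports Defs
begin

lemma E_dim[simp]: "dim_row (E_mat l m n a b c d) = 4" "dim_col (E_mat l m n a b c d) = 4"
  by (simp_all add: E_mat_def mat_of_rows_list_def)

lemma E_idx[simp]: "E_mat l m n a b c d $$ (0,0) = a" "E_mat l m n a b c d $$ (1,0) = b"
  "E_mat l m n a b c d $$ (2,0) = c" "E_mat l m n a b c d $$ (3,0) = d"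
  by (simp_all add: E_mat_def mat_of_rows_list_def)

lemma E_eq_iff[simp]: "E_mat l m n a b c d = E_mat l m n a' b' c' d' \<longleftrightarrow> a = a' \<and> b = b' \<and> c = c' \<and> d = d'"
  by (metis E_idx)

lemma E_mul[simp]: "E_mat l m n a b c d * E_mat l m n a' b' c' d' =
  E_mat l m n (a*a') (a*b'+a'*b) (a*c'+a'*c) (a*d'+a'*d + (l*b*b' + n*(b*c'+c*b') + m*c*c'))"
  apply (rule eq_matI)
  apply (auto simp: E_mat_def mat_of_rows_list_def scalar_prod_def row_def col_def numeral_eq_Suc less_Suc_eq)
  apply (auto simp: numeral_eq_Suc lessThan_Suc algebra_simps)
  done

lemma E_add[simp]: "E_mat l m n a b c d + E_mat l m n a' b' c' d' = E_mat l m n (a+a') (b+b') (c+c') (d+d')"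
  apply (rule eq_matI)
  apply (auto simp: E_mat_def mat_of_rows_list_def numeral_eq_Suc less_Suc_eq)
  apply (auto simp: algebra_simps)
  done

lemma E_smult[simp]: "x \<cdot>\<^sub>m E_mat l m n a b c d = E_mat l m n (x*a) (x*b) (x*c) (x*d)"
  apply (rule eq_matI)
  apply (auto simp: E_mat_def mat_of_rows_list_def numeral_eq_Suc less_Suc_eq)
  apply (auto simp: algebra_simps)
  done

lemma E_in[simp]: "E_mat l m n a b c d \<in> E_alg l m n"
  by (auto simp: E_alg_def)

lemma E_alg_cases:
  assumes "x \<in> E_alg l m n" obtains a b c d where "x = E_mat l m n a b c d"
  using assms by (auto simp: E_alg_def)

lemma ball_E: "(\<forall>x\<in>E_alg l m n. P x) \<longleftrightarrow> (\<forall>a b c d. P (E_mat l m n a b c d))"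
  by (auto elim: E_alg_cases)

lemma lin_E:
  fixes f :: "'a::field mat \<Rightarrow> 'a"
  assumes "f \<in> lin_dual (E_alg l m n)"
  shows "f (E_mat l m n a b c d) = a * f (E_mat l m n 1 0 0 0) + b * f (E_mat l m n 0 1 0 0)
     + c * f (E_mat l m n 0 0 1 0) + d * f (E_mat l m n 0 0 0 1)"
proof -
  have add: "\<And>x y. x \<in> E_alg l m n \<Longrightarrow> y \<in> E_alg l m n \<Longrightarrow> f (x + y) = f x + f y"
    and sm: "\<And>c x. x \<in> E_alg l m n \<Longrightarrow> f (c \<cdot>\<^sub>m x) = c * f x"
    using assms by (auto simp: lin_dual_def)
  have eq: "E_mat l m n a b c d = (a \<cdot>\<^sub>m E_mat l m n 1 0 0 0 + b \<cdot>\<^sub>m E_mat l m n 0 1 0 0)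
     + (c \<cdot>\<^sub>m E_mat l m n 0 0 1 0 + d \<cdot>\<^sub>m E_mat l m n 0 0 0 1)" by simp
  show ?thesis
    apply (subst eq)
    apply (subst add)
      apply (simp only: E_smult E_add E_in)
     apply (simp only: E_smult E_add E_in)
    apply (subst add, simp only: E_smult E_in, simp only: E_smult E_in)
    apply (subst add, simp only: E_smult E_in, simp only: E_smult E_in)
    apply (simp only: sm E_in)
    apply (simp add: algebra_simps)
    done
qed

lemma nondeg:
  fixes l m n u v :: "'a::field"
  assumes "l * m - n^2 \<noteq> 0" "l*u + n*v = 0" "n*u + m*v = 0"
  shows "u = 0 \<and> v = 0"
proof -
  have "(l*m - n^2) * u = m*(l*u + n*v) - n*(n*u + m*v)" by (simp add: algebra_simps power2_eq_square)
  hence u: "u = 0" using assms by simp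
  have "(l*m - n^2) * v = l*(n*u + m*v) - n*(l*u + n*v)" by (simp add: algebra_simps power2_eq_square)
  hence "v = 0" using assms by simp
  with u show ?thesis by simp
qed

lemma one_mul[simp]: "E_mat l m n 1 0 0 0 * x = x" if "x \<in> E_alg l m n"
  using that by (auto elim: E_alg_cases)

lemma kernel_vec:
  fixes l m n :: "'a::field"
  assumes "l * m - n^2 = 0"
  obtains u v where "(u, v) \<noteq> (0, 0)" "l*u + n*v = 0" "n*u + m*v = 0"
proof (cases "l = 0 \<and> n = 0")
  case True
  then show ?thesis using that[of 1 0] by simp
next
  case False
  have "n*n + m*(-l) = 0" using assms by (simp add: algebra_simps power2_eq_square)
  moreover have "l*n + n*(-l) = 0" by (simp add: algebra_simps)
  ultimately show ?thesis using that[of n "-l"] False by auto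
qed

theorem lemma4p2:
  fixes lam mu nu :: "'a::field_char_0"
  assumes "alg_closed TYPE('a)"
  shows "symmetric_frobenius (E_alg lam mu nu) \<longleftrightarrow> lam * mu - nu ^ 2 \<noteq> 0"
proof
  assume "symmetric_frobenius (E_alg lam mu nu)"
  then obtain \<phi> :: "'a mat \<Rightarrow> ('a mat \<Rightarrow> 'a)" where
    bij: "bij_betw \<phi> (E_alg lam mu nu) (lin_dual (E_alg lam mu nu))"
    and sm: "\<forall>c. \<forall>x\<in>E_alg lam mu nu. \<phi> (c \<cdot>\<^sub>m x) = (\<lambda>e. c * \<phi> x e)"
    and eqv: "\<forall>x\<in>E_alg lam mu nu. \<forall>a\<in>E_alg lam mu nu. \<forall>y\<in>E_alg lam mu nu.
       \<phi> (x * a * y) = dual_act (E_alg lam mu nu) x (\<phi> a) y"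
    unfolding symmetric_frobenius_def by blast
  let ?A = "E_alg lam mu nu"
  let ?E = "E_mat lam mu nu"
  define \<epsilon> where "\<epsilon> = \<phi> (?E 1 0 0 0)"
  have inj: "inj_on \<phi> ?A" and into: "\<And>x. x \<in> ?A \<Longrightarrow> \<phi> x \<in> lin_dual ?A"
    using bij by (auto simp: bij_betw_def)
  have epsl: "\<epsilon> \<in> lin_dual ?A" unfolding \<epsilon>_def by (rule into) simp
  have rep: "\<phi> x e = \<epsilon> (e * x)" if "x \<in> ?A" "e \<in> ?A" for x e
  proof -
    have "x * ?E 1 0 0 0 * ?E 1 0 0 0 = x" using that by (auto elim!: E_alg_cases)
    hence "\<phi> x = dual_act ?A x \<epsilon> (?E 1 0 0 0)"
      using eqv that unfolding \<epsilon>_def by (metis E_in)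
    thus ?thesis using that by (simp add: dual_act_def)
  qed
  have zero: "\<phi> (?E 0 0 0 0) = (\<lambda>e. 0)"
    using spec[OF sm, of 0] by (simp add: ball_E)
  have key: False if y: "y \<in> ?A" "y \<noteq> ?E 0 0 0 0" "\<And>e. e \<in> ?A \<Longrightarrow> \<epsilon> (e * y) = 0" for y
  proof -
    have "\<phi> y = \<phi> (?E 0 0 0 0)"
    proof
      fix e show "\<phi> y e = \<phi> (?E 0 0 0 0) e"
      proof (cases "e \<in> ?A")
        case True then show ?thesis using rep[OF y(1) True] y(3)[OF True] zero by simp
      next
        case False then show ?thesis using into[OF y(1)] zero by (simp add: lin_dual_def)
      qed
    qed
    hence "y = ?E 0 0 0 0" using inj y(1) by (auto simp: inj_on_def)
    thus False using y(2) by simp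
  qed
  show "lam * mu - nu ^ 2 \<noteq> 0"
  proof
    assume D: "lam * mu - nu ^ 2 = 0"
    obtain u v where uv: "(u, v) \<noteq> (0, 0)" "lam*u + nu*v = 0" "nu*u + mu*v = 0"
      using kernel_vec[OF D] by blast
    define e4 where "e4 = \<epsilon> (?E 0 0 0 1)"
    define e2 where "e2 = \<epsilon> (?E 0 1 0 0)"
    define e3 where "e3 = \<epsilon> (?E 0 0 1 0)"
    show False
    proof (cases "e4 = 0")
      case True
      show False
      proof (rule key[of "?E 0 0 0 1"])
        fix e assume "e \<in> ?A"
        then obtain a b c d where e: "e = ?E a b c d" by (auto elim: E_alg_cases)
        show "\<epsilon> (e * ?E 0 0 0 1) = 0"
          using True unfolding e e4_def by (simp, subst lin_E[OF epsl], simp)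
      qed simp_all
    next
      case False
      define s where "s = u*e2 + v*e3"
      show False
      proof (rule key[of "?E 0 (e4*u) (e4*v) (-s)"])
        fix e assume "e \<in> ?A"
        then obtain a b c d where e: "e = ?E a b c d" by (auto elim: E_alg_cases)
        have q: "lam*b*(e4*u) + nu*(b*(e4*v) + c*(e4*u)) + mu*c*(e4*v)
            = e4*(b*(lam*u+nu*v) + c*(nu*u+mu*v))" by (simp add: algebra_simps)
        have q0: "lam*b*(e4*u) + nu*(b*(e4*v) + c*(e4*u)) + mu*c*(e4*v) = 0"
          unfolding q using uv by simp
        show "\<epsilon> (e * ?E 0 (e4*u) (e4*v) (-s)) = 0"
          unfolding e E_mul q0 by (subst lin_E[OF epsl], simp add: e2_def[symmetric] e3_def[symmetric]
              e4_def[symmetric] s_def algebra_simps)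
      next
        show "?E 0 (e4*u) (e4*v) (-s) \<noteq> ?E 0 0 0 0" using False uv(1) by auto
      qed simp
    qed
  qed
next
  assume D: "lam * mu - nu ^ 2 \<noteq> 0"
  let ?A = "E_alg lam mu nu"
  let ?E = "E_mat lam mu nu"
  define \<phi> where "\<phi> x = (\<lambda>e. if e \<in> ?A then (x * e) $$ (3,0) else 0)" for x :: "'a mat"
  have into: "\<phi> x \<in> lin_dual ?A" if "x \<in> ?A" for x
    using that by (auto elim!: E_alg_cases simp: lin_dual_def \<phi>_def ball_E algebra_simps)
  have inj: "inj_on \<phi> ?A"
  proof (rule inj_onI)
    fix x y assume x: "x \<in> ?A" and y: "y \<in> ?A" and eq: "\<phi> x = \<phi> y"
    obtain a b c d where xe: "x = ?E a b c d" using x by (auto elim: E_alg_cases)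
    obtain a' b' c' d' where ye: "y = ?E a' b' c' d'" using y by (auto elim: E_alg_cases)
    have 1: "\<phi> x (?E 1 0 0 0) = \<phi> y (?E 1 0 0 0)" "\<phi> x (?E 0 1 0 0) = \<phi> y (?E 0 1 0 0)"
      "\<phi> x (?E 0 0 1 0) = \<phi> y (?E 0 0 1 0)" "\<phi> x (?E 0 0 0 1) = \<phi> y (?E 0 0 0 1)"
      using eq by simp_all
    hence h: "d = d'" "lam*b + nu*c = lam*b' + nu*c'" "nu*b + mu*c = nu*b' + mu*c'" "a = a'"
      unfolding xe ye \<phi>_def by (simp_all add: algebra_simps)
    have "lam*(b-b') + nu*(c-c') = 0" "nu*(b-b') + mu*(c-c') = 0"
      using h by (simp_all add: algebra_simps)
    from nondeg[OF D this] have "b = b'" "c = c'" by simp_all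
    thus "x = y" using h xe ye by simp
  qed
  have surj: "lin_dual ?A \<subseteq> \<phi> ` ?A"
  proof
    fix f assume f: "f \<in> lin_dual ?A"
    define f1 where "f1 = f (?E 1 0 0 0)"
    define f2 where "f2 = f (?E 0 1 0 0)"
    define f3 where "f3 = f (?E 0 0 1 0)"
    define f4 where "f4 = f (?E 0 0 0 1)"
    define iD where "iD = inverse (lam * mu - nu ^ 2)"
    have iD: "iD * (lam * mu - nu ^ 2) = 1" unfolding iD_def using D by simp
    define bx where "bx = iD * (mu*f2 - nu*f3)"
    define cx where "cx = iD * (lam*f3 - nu*f2)"
    have "lam*bx + nu*cx = (iD * (lam * mu - nu ^ 2)) * f2"
      unfolding bx_def cx_def by (simp add: algebra_simps power2_eq_square)
    hence s1: "lam*bx + nu*cx = f2" using iD by simp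
    have "nu*bx + mu*cx = (iD * (lam * mu - nu ^ 2)) * f3"
      unfolding bx_def cx_def by (simp add: algebra_simps power2_eq_square)
    hence s2: "nu*bx + mu*cx = f3" using iD by simp
    have "f = \<phi> (?E f4 bx cx f1)"
    proof
      fix e show "f e = \<phi> (?E f4 bx cx f1) e"
      proof (cases "e \<in> ?A")
        case True
        then obtain a b c d where e: "e = ?E a b c d" by (auto elim: E_alg_cases)
        have q: "lam*bx*b + nu*(bx*c + cx*b) + mu*cx*c = b*(lam*bx + nu*cx) + c*(nu*bx+mu*cx)"
          by (simp add: algebra_simps)
        show ?thesis unfolding e \<phi>_def
          by (subst lin_E[OF f], simp add: s1[symmetric] s2[symmetric] f1_def[symmetric] f2_def[symmetric]
              f3_def[symmetric] f4_def[symmetric] algebra_simps)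
      next
        case False then show ?thesis using f by (simp add: \<phi>_def lin_dual_def)
      qed
    qed
    thus "f \<in> \<phi> ` ?A" by (rule image_eqI) simp
  qed
  have bij: "bij_betw \<phi> ?A (lin_dual ?A)"
  proof -
    have sub: "\<phi> ` ?A \<subseteq> lin_dual ?A" using into by (rule image_subsetI)
    show ?thesis unfolding bij_betw_def using inj surj sub by (simp add: subset_antisym)
  qed
  have add: "\<forall>x\<in>?A. \<forall>y\<in>?A. \<phi> (x + y) = (\<lambda>e. \<phi> x e + \<phi> y e)"
    by (auto simp: ball_E \<phi>_def fun_eq_iff algebra_simps elim!: E_alg_cases)
  have smul: "\<forall>c. \<forall>x\<in>?A. \<phi> (c \<cdot>\<^sub>m x) = (\<lambda>e. c * \<phi> x e)"
    by (auto simp: ball_E \<phi>_def fun_eq_iff algebra_simps elim!: E_alg_cases)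
  have cl: "X * Y \<in> ?A" if "X \<in> ?A" "Y \<in> ?A" for X Y
    using that by (auto elim!: E_alg_cases)
  have cm: "X * Y = Y * X" if "X \<in> ?A" "Y \<in> ?A" for X Y
    using that by (auto elim!: E_alg_cases simp: algebra_simps)
  have car: "X \<in> carrier_mat 4 4" if "X \<in> ?A" for X
    using that by (auto elim!: E_alg_cases)
  have as: "X * Y * Z = X * (Y * Z)" if "X \<in> ?A" "Y \<in> ?A" "Z \<in> ?A" for X Y Z
    using that car assoc_mult_mat by metis
  have eqv: "\<forall>x\<in>?A. \<forall>a\<in>?A. \<forall>y\<in>?A. \<phi> (x * a * y) = dual_act ?A x (\<phi> a) y"
  proof (intro ballI ext)
    fix x a y e assume x: "x \<in> ?A" and a: "a \<in> ?A" and y: "y \<in> ?A"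
    show "\<phi> (x * a * y) e = dual_act ?A x (\<phi> a) y e"
    proof (cases "e \<in> ?A")
      case True
      have eq1: "x * a * y * e = (x * a) * (y * e)"
        using as[of "x*a" y e] cl x a y True by simp
      have eq2: "a * (y * e * x) = (x * a) * (y * e)"
        using cm[of "y*e" x] as[of a x "y*e"] cm[of a x] cl x a y True by simp
      have "y * e * x \<in> ?A" using cl x y True by simp
      then show ?thesis using cl x a y True eq1 eq2 by (simp add: \<phi>_def dual_act_def)
    next
      case False then show ?thesis by (simp add: \<phi>_def dual_act_def)
    qed
  qed
  show "symmetric_frobenius ?A"
    unfolding symmetric_frobenius_def using bij add smul eqv by blast
qed

end
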